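(* Let $\Omega\subset\mathbb{R}^d$ be a bounded domain, $B_1,\dots,B_m\subset\Omega$ open nonempty sets, $K_i\supset B_i$ convex sets with Lipschitz boundary with $\Omega\subset\bigcup_i\overline{K_i}$, $M=\max_{x\in\Omega}|\{i:x\in K_i\}|$ and $r=\max_i\operatorname{diam}(B_i)$. Let $u\in C^{0,\lambda}(\overline\Omega)$ for some $\lambda\in(0,1]$, let $p_i\in B_i$ and $b_i=u(p_i)$ for $i=1,\dots,m$, and define $b(u,v)=\sum_i|B_i|\mathrm{avg}_{B_i}(u)\mathrm{avg}_{B_i}(v)$ and $\widetilde{b(u,v)}=\sum_ib_i|B_i|\mathrm{avg}_{B_i}(v)$. Then $$\mathbb{E}_{\mathrm{data}}=\sup_{0\ne v\in L^2(\Omega)}\frac{|\widetilde{b(u,v)}-b(u,v)|}{\|v\|_{L^2(\Omega)}}\le\|u\|_{C^{0,\lambda}(\overline\Omega)}\,M\,|\Omega|^{1/2}\,r^\lambda.$$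
   Context: $\mathrm{avg}_U(v)=|U|^{-1}\int_Uv\,dx$. $C^{0,\lambda}(\overline\Omega)$ is the space of $\lambda$-Hölder continuous functions (Lipschitz for $\lambda=1$) with its usual norm, which bounds the Hölder seminorm $\sup_{x\ne y}|u(x)-u(y)|/|x-y|^\lambda$. *)

theory Defs
  imports "HOL-Analysis.Analysis"
begin

definition avg :: "'a::euclidean_space set \<Rightarrow> ('a \<Rightarrow> real) \<Rightarrow> real" where
  "avg U v = (1 / measure lebesgue U) * (LINT x:U|lebesgue. v x)"

definition holder_on :: "real \<Rightarrow> 'a::metric_space set \<Rightarrow> ('a \<Rightarrow> real) \<Rightarrow> bool" where
  "holder_on lam S u \<longleftrightarrow> (\<exists>C. \<forall>x\<in>S. \<forall>y\<in>S. \<bar>u x - u y\<bar> \<le> C * dist x y powr lam)"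

definition holder_seminorm :: "real \<Rightarrow> 'a::metric_space set \<Rightarrow> ('a \<Rightarrow> real) \<Rightarrow> real" where
  "holder_seminorm lam S u =
     (SUP xy \<in> {(x,y). x \<in> S \<and> y \<in> S \<and> x \<noteq> y}. \<bar>u (fst xy) - u (snd xy)\<bar> / dist (fst xy) (snd xy) powr lam)"

definition holder_norm :: "real \<Rightarrow> 'a::metric_space set \<Rightarrow> ('a \<Rightarrow> real) \<Rightarrow> real" where
  "holder_norm lam S u = (SUP x \<in> S. \<bar>u x\<bar>) + holder_seminorm lam S u"

text \<open>Lipschitz boundary: near every boundary point, after choosing a unit direction e,
  the interior of K is the strict subgraph (in direction e) of a Lipschitz function
  defined on the hyperplane orthogonal to e.\<close>
definition lipschitz_boundary :: "'a::euclidean_space set \<Rightarrow> bool" where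
  "lipschitz_boundary K \<longleftrightarrow>
     (\<forall>x \<in> frontier K. \<exists>e \<rho> g L. norm e = 1 \<and> \<rho> > 0 \<and>
        L-lipschitz_on {z. z \<bullet> e = 0} g \<and>
        interior K \<inter> ball x \<rho> = {y \<in> ball x \<rho>. y \<bullet> e < g (y - (y \<bullet> e) *\<^sub>R e)})"

definition L2_on :: "'a::euclidean_space set \<Rightarrow> ('a \<Rightarrow> real) \<Rightarrow> bool" where
  "L2_on \<Omega> v \<longleftrightarrow> set_borel_measurable lebesgue \<Omega> v \<and> set_integrable lebesgue \<Omega> (\<lambda>x. (v x)\<^sup>2)"

definition L2_norm :: "'a::euclidean_space set \<Rightarrow> ('a \<Rightarrow> real) \<Rightarrow> real" where
  "L2_norm \<Omega> v = sqrt (LINT x:\<Omega>|lebesgue. (v x)\<^sup>2)"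

end

theory Submission
  imports Defs
begin

lemma set_integrable_const_lm:
  fixes c :: real
  assumes "S \<in> lmeasurable"
  shows "set_integrable lebesgue S (\<lambda>_. c)"
  using assms unfolding set_integrable_def
  by (simp add: fmeasurable_def) (metis integrable_real_indicator infinity_ennreal_def)

lemma set_integral_const_lm:
  fixes c :: real
  assumes "S \<in> lmeasurable"
  shows "(LINT x:S|lebesgue. c) = measure lebesgue S * c"
proof -
  have "S \<in> sets lebesgue" "emeasure lebesgue S \<noteq> \<infinity>"
    using assms by (auto simp: fmeasurable_def)
  then show ?thesis by (simp add: set_integral_const)
qed

lemma open_pos_measure:
  fixes S :: "'a::euclidean_space set"
  assumes a: "open S" "S \<noteq> {}" "S \<in> lmeasurable"
  shows "0 < measure lebesgue S"
proof -
  obtain c e where ce: "e > 0" "ball c e \<subseteq> S" using a by (meson ex_in_conv openE)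
  then have 1: "measure lebesgue (ball c e) \<le> measure lebesgue S"
    by (intro measure_mono_fmeasurable) (use a in \<open>auto simp: fmeasurable_def\<close>)
  have 2: "measure lebesgue (ball c e) = measure lborel (ball c e)" by simp
  have 3: "measure lborel (ball c e) > 0" using content_ball_pos[OF ce(1), of c] by simp
  show ?thesis using 1 2 3 by linarith
qed

lemma cont_bdd_set_integrable:
  fixes f :: "'a::euclidean_space \<Rightarrow> real"
  assumes "continuous_on S f" "S \<in> lmeasurable" "\<And>x. x \<in> S \<Longrightarrow> \<bar>f x\<bar> \<le> c"
  shows "set_integrable lebesgue S f"
proof (rule set_integrable_bound[where f="\<lambda>_. c"])
  show "set_integrable lebesgue S (\<lambda>_. c)"
    using assms(2) unfolding set_integrable_def
    by (simp add: fmeasurable_def) (metis integrable_real_indicator infinity_ennreal_def)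
  have "(\<lambda>x. if x \<in> S then f x else 0) \<in> borel_measurable lebesgue"
    by (rule borel_measurable_if_I) (use assms continuous_imp_measurable_on_sets_lebesgue fmeasurable_def in auto)
  then show "set_borel_measurable lebesgue S f"
  proof -
    have "(\<lambda>x. indicator S x *\<^sub>R f x) = (\<lambda>x. if x \<in> S then f x else 0)"
      by (auto simp: indicator_def)
    then show ?thesis using \<open>_ \<in> borel_measurable lebesgue\<close> unfolding set_borel_measurable_def by simp
  qed
  show "AE x in lebesgue. x \<in> S \<longrightarrow> norm (f x) \<le> norm c"
    using assms(3) by (auto intro!: AE_I2 order_trans[OF _ abs_ge_self])
qed

lemma holder_cont:
  fixes u :: "'a::metric_space \<Rightarrow> real"
  assumes C: "\<forall>x\<in>S. \<forall>y\<in>S. \<bar>u x - u y\<bar> \<le> C * dist x y powr lam" and lam: "0 < lam"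
  shows "continuous_on S u"
  unfolding continuous_on_def
proof (intro ballI)
  fix x assume x: "x \<in> S"
  have "((\<lambda>y. dist y x powr lam) \<longlongrightarrow> 0) (at x within S)"
    by (rule tendsto_zero_powrI) (auto intro!: tendsto_eq_intros lam)
  then have L: "((\<lambda>y. C * dist y x powr lam) \<longlongrightarrow> 0) (at x within S)"
    by (rule tendsto_mult_right_zero)
  have E: "eventually (\<lambda>y. norm (u y - u x) \<le> C * dist y x powr lam) (at x within S)"
    using C x by (auto simp: eventually_at_filter)
  have "((\<lambda>y. u y - u x) \<longlongrightarrow> 0) (at x within S)"
    by (rule Lim_null_comparison[OF E L])
  then show "(u \<longlongrightarrow> u x) (at x within S)"
    by (simp add: LIM_zero_iff)
qed

theorem proposition3p11:
  fixes \<Omega> :: "'a::euclidean_space set"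
    and B K :: "nat \<Rightarrow> 'a set"
    and m :: nat
    and u :: "'a \<Rightarrow> real"
    and lam :: real
    and p :: "nat \<Rightarrow> 'a"
  assumes dom: "open \<Omega>" "connected \<Omega>" "\<Omega> \<noteq> {}" "bounded \<Omega>"
    and B: "\<And>i. i \<in> {1..m} \<Longrightarrow> open (B i) \<and> B i \<noteq> {} \<and> B i \<subseteq> \<Omega>"
    and K: "\<And>i. i \<in> {1..m} \<Longrightarrow> convex (K i) \<and> lipschitz_boundary (K i) \<and> B i \<subseteq> K i"
    and cover: "\<Omega> \<subseteq> (\<Union>i\<in>{1..m}. closure (K i))"
    and lam: "0 < lam" "lam \<le> 1"
    and u: "holder_on lam (closure \<Omega>) u"
    and p: "\<And>i. i \<in> {1..m} \<Longrightarrow> p i \<in> B i"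
  shows "let M = Max ((\<lambda>x. card {i \<in> {1..m}. x \<in> K i}) ` \<Omega>);
             r = Max ((\<lambda>i. diameter (B i)) ` {1..m});
             b = (\<lambda>i. u (p i));
             bf = (\<lambda>v. \<Sum>i\<in>{1..m}. measure lebesgue (B i) * avg (B i) u * avg (B i) v);
             bt = (\<lambda>v. \<Sum>i\<in>{1..m}. b i * measure lebesgue (B i) * avg (B i) v)
         in \<forall>v. L2_on \<Omega> v \<and> L2_norm \<Omega> v \<noteq> 0 \<longrightarrow>
              \<bar>bt v - bf v\<bar> / L2_norm \<Omega> v
                \<le> holder_norm lam (closure \<Omega>) u * real M * sqrt (measure lebesgue \<Omega>) * r powr lam"
proof -
  define M where "M = Max ((\<lambda>x. card {i \<in> {1..m}. x \<in> K i}) ` \<Omega>)"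
  define r where "r = Max ((\<lambda>i. diameter (B i)) ` {1..m})"
  define H where "H = holder_seminorm lam (closure \<Omega>) u"
  have Bm: "B i \<in> lmeasurable" if "i \<in> {1..m}" for i
    using B[OF that] dom(4) by (meson bounded_subset lmeasurable_open)
  have Om: "\<Omega> \<in> lmeasurable" using dom by (simp add: lmeasurable_open)
  obtain C where C: "\<forall>x\<in>closure \<Omega>. \<forall>y\<in>closure \<Omega>. \<bar>u x - u y\<bar> \<le> C * dist x y powr lam"
    using u unfolding holder_on_def by blast
  have cont: "continuous_on (closure \<Omega>) u" by (rule holder_cont[OF C lam(1)])
  have "compact (u ` closure \<Omega>)"
    using cont dom(4) by (simp add: compact_continuous_image compact_closure)
  then obtain Bd where Bd: "\<And>x. x \<in> closure \<Omega> \<Longrightarrow> \<bar>u x\<bar> \<le> Bd"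
    using compact_imp_bounded[of "u ` closure \<Omega>"] unfolding bounded_iff by auto
  obtain x0 where x0: "x0 \<in> \<Omega>" using dom(3) by blast
  obtain y0 where y0: "y0 \<in> \<Omega>" "y0 \<noteq> x0"
  proof -
    have "\<Omega> \<noteq> {x0}" using dom(1) not_open_singleton by metis
    then show ?thesis using that x0 by blast
  qed
  define P where "P = {(x,y). x \<in> closure \<Omega> \<and> y \<in> closure \<Omega> \<and> x \<noteq> y}"
  define q where "q = (\<lambda>xy. \<bar>u (fst xy) - u (snd xy)\<bar> / dist (fst xy) (snd xy) powr lam)"
  have Hdef: "H = (SUP xy \<in> P. q xy)" unfolding H_def holder_seminorm_def P_def q_def by simp
  have bdd: "bdd_above (q ` P)"
  proof (rule bdd_aboveI2)
    fix xy assume "xy \<in> P"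
    then obtain x y where xy: "xy = (x,y)" "x \<in> closure \<Omega>" "y \<in> closure \<Omega>" "x \<noteq> y"
      unfolding P_def by auto
    have "dist x y powr lam > 0" using xy(4) by simp
    then show "q xy \<le> C" using C xy unfolding q_def by (simp add: divide_le_eq)
  qed
  have qH: "q xy \<le> H" if "xy \<in> P" for xy
    unfolding Hdef by (rule cSUP_upper[OF that bdd])
  have H0: "0 \<le> H"
    using qH[of "(x0,y0)"] x0 y0 closure_subset unfolding P_def q_def
    by (smt (verit) case_prod_conv divide_nonneg_nonneg abs_ge_zero powr_ge_zero mem_Collect_eq subsetD fst_conv snd_conv)
  have hol: "\<bar>u x - u y\<bar> \<le> H * dist x y powr lam" if "x \<in> closure \<Omega>" "y \<in> closure \<Omega>" for x y
  proof (cases "x = y")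
    case True then show ?thesis using H0 by simp
  next
    case False
    have pos: "dist x y powr lam > 0" using False by simp
    have "q (x,y) \<le> H" using qH[of "(x,y)"] that False unfolding P_def by auto
    then show ?thesis using pos unfolding q_def by (simp add: divide_le_eq mult.commute)
  qed
  have Hn: "H \<le> holder_norm lam (closure \<Omega>) u"
  proof -
    have "0 \<le> (SUP x \<in> closure \<Omega>. \<bar>u x\<bar>)"
      by (rule cSUP_upper2[where x=x0]) (use x0 closure_subset Bd in \<open>auto intro!: bdd_aboveI2\<close>)
    then show ?thesis unfolding holder_norm_def H_def by simp
  qed
  have Mfin: "finite ((\<lambda>x. card {i \<in> {1..m}. x \<in> K i}) ` \<Omega>)"
  proof (rule finite_subset[of _ "{0..m}"])
    show "(\<lambda>x. card {i \<in> {1..m}. x \<in> K i}) ` \<Omega> \<subseteq> {0..m}"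
    proof
      fix n assume "n \<in> (\<lambda>x. card {i \<in> {1..m}. x \<in> K i}) ` \<Omega>"
      then obtain x where "n = card {i \<in> {1..m}. x \<in> K i}" by blast
      moreover have "card {i \<in> {1..m}. x \<in> K i} \<le> card {1..m}"
        by (rule card_mono) auto
      ultimately show "n \<in> {0..m}" by simp
    qed
  qed simp
  have cardM: "card {i \<in> {1..m}. x \<in> B i} \<le> M" if "x \<in> \<Omega>" for x
  proof -
    have "card {i \<in> {1..m}. x \<in> B i} \<le> card {i \<in> {1..m}. x \<in> K i}"
      by (rule card_mono) (use K in auto)
    also have "\<dots> \<le> M" unfolding M_def by (rule Max_ge[OF Mfin]) (use that in blast)
    finally show ?thesis .
  qed
  have dist_r: "dist x y \<le> r" if "i \<in> {1..m}" "x \<in> B i" "y \<in> B i" for i x y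
  proof -
    have "bounded (B i)" using B[OF that(1)] dom(4) bounded_subset by blast
    then have "dist x y \<le> diameter (B i)" using diameter_bounded_bound that by blast
    also have "\<dots> \<le> r" unfolding r_def by (rule Max_ge) (use that in auto)
    finally show ?thesis .
  qed
  have ub: "\<bar>u x - u y\<bar> \<le> H * r powr lam" if "i \<in> {1..m}" "x \<in> B i" "y \<in> B i" for i x y
  proof -
    have xy: "x \<in> closure \<Omega>" "y \<in> closure \<Omega>" using B[OF that(1)] that closure_subset by blast+
    have "dist x y powr lam \<le> r powr lam"
      by (rule powr_mono2) (use lam dist_r[OF that] in auto)
    then show ?thesis using hol[OF xy] H0 by (meson mult_left_mono order_trans)
  qed
  have uint: "set_integrable lebesgue (B i) u" if "i \<in> {1..m}" for i
    by (rule cont_bdd_set_integrable[OF continuous_on_subset[OF cont] Bm[OF that], where c=Bd])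
       (use B[OF that] closure_subset Bd in auto)
  have main: "\<bar>(\<Sum>i\<in>{1..m}. u (p i) * measure lebesgue (B i) * avg (B i) v) -
               (\<Sum>i\<in>{1..m}. measure lebesgue (B i) * avg (B i) u * avg (B i) v)\<bar> / L2_norm \<Omega> v
          \<le> holder_norm lam (closure \<Omega>) u * real M * sqrt (measure lebesgue \<Omega>) * r powr lam"
    if v: "L2_on \<Omega> v" "L2_norm \<Omega> v \<noteq> 0" for v
  proof -
    define A where "A = (LINT x:\<Omega>|lebesgue. (v x)\<^sup>2)"
    have A0: "0 \<le> A" unfolding A_def set_lebesgue_integral_def by (simp add: integral_nonneg)
    have Apos: "0 < A" using v(2) A0 unfolding L2_norm_def A_def by auto
    have v2: "set_integrable lebesgue \<Omega> (\<lambda>x. (v x)\<^sup>2)" using v(1) unfolding L2_on_def by blast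
    have vint: "set_integrable lebesgue \<Omega> v"
    proof (rule set_integrable_bound[where f="\<lambda>x. (v x)\<^sup>2 + 1"])
      show "set_integrable lebesgue \<Omega> (\<lambda>x. (v x)\<^sup>2 + 1)"
        by (rule set_integral_add(1)[OF v2 set_integrable_const_lm[OF Om]])
      show "set_borel_measurable lebesgue \<Omega> v" using v(1) unfolding L2_on_def by blast
      have "\<bar>t\<bar> \<le> t\<^sup>2 + 1" for t :: real
      proof (cases "\<bar>t\<bar> \<le> 1")
        case True then show ?thesis by (smt (verit) zero_le_power2)
      next
        case False
        then have "\<bar>t\<bar> * 1 \<le> \<bar>t\<bar> * \<bar>t\<bar>" by (intro mult_left_mono) auto
        then show ?thesis by (simp add: power2_eq_square abs_mult_self_eq)
      qed
      then show "AE x in lebesgue. x \<in> \<Omega> \<longrightarrow> norm (v x) \<le> norm ((v x)\<^sup>2 + 1)" by auto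
    qed
    have vabs: "set_integrable lebesgue S (\<lambda>x. \<bar>v x\<bar>)" if "S \<in> sets lebesgue" "S \<subseteq> \<Omega>" for S
      using set_integrable_abs[OF set_integrable_subset[OF vint that]] .
    have CS: "(LINT x:\<Omega>|lebesgue. \<bar>v x\<bar>) \<le> sqrt (measure lebesgue \<Omega>) * sqrt A"
    proof -
      have mO: "0 < measure lebesgue \<Omega>" by (rule open_pos_measure[OF dom(1) dom(3) Om])
      define t where "t = sqrt (measure lebesgue \<Omega>) / sqrt A"
      have t0: "t > 0" using mO Apos by (simp add: t_def)
      have pt: "\<bar>v x\<bar> \<le> t / 2 * (v x)\<^sup>2 + 1 / (2 * t)" for x
      proof -
        define w where "w = \<bar>v x\<bar>"
        have vw: "(v x)\<^sup>2 = w\<^sup>2" unfolding w_def by simp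
        have eq: "t * (t * w\<^sup>2 + 1 / t - 2 * w) = (t * w - 1)\<^sup>2"
          using t0 by (simp add: power2_eq_square field_simps)
        have "0 \<le> t * (t * w\<^sup>2 + 1 / t - 2 * w)" unfolding eq by simp
        then have "0 \<le> t * w\<^sup>2 + 1 / t - 2 * w" using t0 by (simp add: zero_le_mult_iff)
        then show ?thesis unfolding vw w_def[symmetric] using t0 by (simp add: field_simps)
      qed
      have int2: "set_integrable lebesgue \<Omega> (\<lambda>x. t / 2 * (v x)\<^sup>2 + 1 / (2 * t))"
        by (rule set_integral_add(1)[OF set_integrable_mult_right[OF v2] set_integrable_const_lm[OF Om]])
      have "(LINT x:\<Omega>|lebesgue. \<bar>v x\<bar>) \<le> (LINT x:\<Omega>|lebesgue. t / 2 * (v x)\<^sup>2 + 1 / (2 * t))"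
        by (rule set_integral_mono[OF vabs[OF _ order_refl] int2 pt]) (use Om in \<open>auto simp: fmeasurable_def\<close>)
      also have "\<dots> = t / 2 * A + measure lebesgue \<Omega> * (1 / (2 * t))"
        using set_integral_add(2)[OF set_integrable_mult_right[OF v2] set_integrable_const_lm[OF Om], of "t/2" "1 / (2 * t)"]
        unfolding A_def set_integral_const_lm[OF Om] by simp
      also have "\<dots> = sqrt (measure lebesgue \<Omega>) * sqrt A"
        using mO Apos unfolding t_def by (simp add: field_simps power2_eq_square)
      finally show ?thesis .
    qed
    have sumb: "(\<Sum>i\<in>{1..m}. LINT x:B i|lebesgue. \<bar>v x\<bar>) \<le> real M * (LINT x:\<Omega>|lebesgue. \<bar>v x\<bar>)"
    proof -
      have iB: "integrable lebesgue (\<lambda>x. indicator (B i) x * \<bar>v x\<bar>)" if "i \<in> {1..m}" for i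
        using vabs[of "B i"] Bm[OF that] B[OF that] unfolding set_integrable_def by (auto simp: fmeasurable_def)
      have iO: "integrable lebesgue (\<lambda>x. indicator \<Omega> x * \<bar>v x\<bar>)"
        using vabs[of \<Omega>] Om unfolding set_integrable_def by (auto simp: fmeasurable_def)
      have "(\<Sum>i\<in>{1..m}. LINT x:B i|lebesgue. \<bar>v x\<bar>) = (\<Sum>i\<in>{1..m}. LINT x|lebesgue. indicator (B i) x * \<bar>v x\<bar>)"
        unfolding set_lebesgue_integral_def by simp
      also have "\<dots> = (LINT x|lebesgue. (\<Sum>i\<in>{1..m}. indicator (B i) x * \<bar>v x\<bar>))"
        by (rule Bochner_Integration.integral_sum[symmetric]) (rule iB)
      also have "\<dots> \<le> (LINT x|lebesgue. real M * (indicator \<Omega> x * \<bar>v x\<bar>))"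
      proof (rule integral_mono)
        show "integrable lebesgue (\<lambda>x. \<Sum>i\<in>{1..m}. indicator (B i) x * \<bar>v x\<bar>)"
          by (rule Bochner_Integration.integrable_sum) (rule iB)
        show "integrable lebesgue (\<lambda>x. real M * (indicator \<Omega> x * \<bar>v x\<bar>))"
          using iO by simp
        fix x
        show "(\<Sum>i\<in>{1..m}. indicator (B i) x * \<bar>v x\<bar>) \<le> real M * (indicator \<Omega> x * \<bar>v x\<bar>)"
        proof (cases "x \<in> \<Omega>")
          case False
          then have "indicator (B i) x = (0::real)" if "i \<in> {1..m}" for i
            using B[OF that] by (auto simp: indicator_def)
          then show ?thesis using False by simp
        next
          case True
          have "(\<Sum>i\<in>{1..m}. indicator (B i) x :: real) = (\<Sum>i\<in>{i \<in> {1..m}. x \<in> B i}. 1)"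
            by (simp add: indicator_def sum.inter_filter) (intro arg_cong[where f=card]; auto)
          also have "\<dots> = real (card {i \<in> {1..m}. x \<in> B i})" by simp
          finally have "(\<Sum>i\<in>{1..m}. indicator (B i) x :: real) \<le> real M"
            using cardM[OF True] by simp
          then have "(\<Sum>i\<in>{1..m}. indicator (B i) x :: real) * \<bar>v x\<bar> \<le> real M * \<bar>v x\<bar>"
            by (rule mult_right_mono) simp
          then show ?thesis using True by (simp add: sum_distrib_right)
        qed
      qed
      also have "\<dots> = real M * (LINT x:\<Omega>|lebesgue. \<bar>v x\<bar>)"
        unfolding set_lebesgue_integral_def by simp
      finally show ?thesis .
    qed
    have termb: "\<bar>u (p i) * measure lebesgue (B i) * avg (B i) v - measure lebesgue (B i) * avg (B i) u * avg (B i) v\<bar>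
        \<le> H * r powr lam * (LINT x:B i|lebesgue. \<bar>v x\<bar>)" if i: "i \<in> {1..m}" for i
    proof -
      define \<mu> where "\<mu> = measure lebesgue (B i)"
      have Bs: "B i \<in> sets lebesgue" using Bm[OF i] by (auto simp: fmeasurable_def)
      have vB: "set_integrable lebesgue (B i) v" by (rule set_integrable_subset[OF vint Bs]) (use B[OF i] in auto)
      have Iv0: "0 \<le> (LINT x:B i|lebesgue. \<bar>v x\<bar>)"
        unfolding set_lebesgue_integral_def by (simp add: integral_nonneg)
      have R0: "0 \<le> H * r powr lam * (LINT x:B i|lebesgue. \<bar>v x\<bar>)" using H0 Iv0 by simp
      show ?thesis
      proof (cases "\<mu> = 0")
        case True
        then show ?thesis using R0 unfolding avg_def \<mu>_def[symmetric] by simp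
      next
        case False
        then have mpos: "\<mu> > 0" unfolding \<mu>_def using measure_nonneg[of lebesgue "B i"] by linarith
        define Iu where "Iu = (LINT x:B i|lebesgue. u x)"
        define Iv where "Iv = (LINT x:B i|lebesgue. v x)"
        have cB: "set_integrable lebesgue (B i) (\<lambda>_. u (p i))" by (rule set_integrable_const_lm[OF Bm[OF i]])
        have D: "u (p i) * \<mu> - Iu = (LINT x:B i|lebesgue. u (p i) - u x)"
          using set_integral_diff(2)[OF cB uint[OF i]] set_integral_const_lm[OF Bm[OF i], of "u (p i)"]
          unfolding Iu_def \<mu>_def by (simp add: mult.commute)
        have "\<bar>u (p i) * \<mu> - Iu\<bar> \<le> (LINT x:B i|lebesgue. \<bar>u (p i) - u x\<bar>)"
          unfolding D using set_integral_norm_bound[OF set_integral_diff(1)[OF cB uint[OF i]]] by simp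
        also have "\<dots> \<le> (LINT x:B i|lebesgue. H * r powr lam)"
          by (rule set_integral_mono[OF set_integrable_abs[OF set_integral_diff(1)[OF cB uint[OF i]]]
                set_integrable_const_lm[OF Bm[OF i]]]) (rule ub[OF i p[OF i]])
        also have "\<dots> = \<mu> * (H * r powr lam)" unfolding \<mu>_def by (rule set_integral_const_lm[OF Bm[OF i]])
        finally have D1: "\<bar>u (p i) * \<mu> - Iu\<bar> \<le> \<mu> * (H * r powr lam)" .
        have D2: "\<bar>Iv\<bar> \<le> (LINT x:B i|lebesgue. \<bar>v x\<bar>)"
          unfolding Iv_def using set_integral_norm_bound[OF vB] by simp
        have eq: "u (p i) * \<mu> * avg (B i) v - \<mu> * avg (B i) u * avg (B i) v = (u (p i) * \<mu> - Iu) * Iv / \<mu>"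
          unfolding avg_def \<mu>_def[symmetric] Iu_def[symmetric] Iv_def[symmetric] using mpos by (simp add: field_simps)
        have "\<bar>(u (p i) * \<mu> - Iu) * Iv / \<mu>\<bar> = \<bar>u (p i) * \<mu> - Iu\<bar> * \<bar>Iv\<bar> / \<mu>"
          using mpos by (simp add: abs_mult)
        also have "\<dots> \<le> \<mu> * (H * r powr lam) * (LINT x:B i|lebesgue. \<bar>v x\<bar>) / \<mu>"
          using mpos H0 by (intro divide_right_mono mult_mono D1 D2) auto
        also have "\<dots> = H * r powr lam * (LINT x:B i|lebesgue. \<bar>v x\<bar>)" using mpos by simp
        finally show ?thesis unfolding \<mu>_def[symmetric] eq .
      qed
    qed
    have "\<bar>(\<Sum>i\<in>{1..m}. u (p i) * measure lebesgue (B i) * avg (B i) v) -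
               (\<Sum>i\<in>{1..m}. measure lebesgue (B i) * avg (B i) u * avg (B i) v)\<bar>
       = \<bar>\<Sum>i\<in>{1..m}. u (p i) * measure lebesgue (B i) * avg (B i) v - measure lebesgue (B i) * avg (B i) u * avg (B i) v\<bar>"
      by (simp add: sum_subtractf)
    also have "\<dots> \<le> (\<Sum>i\<in>{1..m}. \<bar>u (p i) * measure lebesgue (B i) * avg (B i) v - measure lebesgue (B i) * avg (B i) u * avg (B i) v\<bar>)"
      by (rule sum_abs)
    also have "\<dots> \<le> (\<Sum>i\<in>{1..m}. H * r powr lam * (LINT x:B i|lebesgue. \<bar>v x\<bar>))"
      by (rule sum_mono) (rule termb)
    also have "\<dots> = H * r powr lam * (\<Sum>i\<in>{1..m}. LINT x:B i|lebesgue. \<bar>v x\<bar>)"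
      by (simp add: sum_distrib_left)
    also have "\<dots> \<le> H * r powr lam * (real M * (sqrt (measure lebesgue \<Omega>) * sqrt A))"
    proof (rule mult_left_mono)
      show "0 \<le> H * r powr lam" using H0 by simp
      have "real M * (LINT x:\<Omega>|lebesgue. \<bar>v x\<bar>) \<le> real M * (sqrt (measure lebesgue \<Omega>) * sqrt A)"
        by (rule mult_left_mono[OF CS]) simp
      then show "(\<Sum>i\<in>{1..m}. LINT x:B i|lebesgue. \<bar>v x\<bar>) \<le> real M * (sqrt (measure lebesgue \<Omega>) * sqrt A)"
        using sumb by linarith
    qed
    also have "\<dots> \<le> holder_norm lam (closure \<Omega>) u * real M * sqrt (measure lebesgue \<Omega>) * r powr lam * sqrt A"
    proof -
      have "0 \<le> r powr lam * (real M * (sqrt (measure lebesgue \<Omega>) * sqrt A))" using A0 by (simp add: measure_nonneg)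
      then have "H * (r powr lam * (real M * (sqrt (measure lebesgue \<Omega>) * sqrt A)))
          \<le> holder_norm lam (closure \<Omega>) u * (r powr lam * (real M * (sqrt (measure lebesgue \<Omega>) * sqrt A)))"
        by (rule mult_right_mono[OF Hn])
      then show ?thesis by (simp add: algebra_simps)
    qed
    finally show ?thesis
      using Apos unfolding L2_norm_def A_def[symmetric] by (simp add: pos_divide_le_eq)
  qed
  show ?thesis unfolding Let_def M_def[symmetric] r_def[symmetric] using main by blast
qed

end
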